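(* There is an absolute constant $K>0$ such that the following holds. Let $\mathcal U$ be a finite set, $V'\subseteq\mathbb{R}^{\mathcal U}$ a linear subspace with orthogonal projector $\Pi_{V'}$, and $c>0$ such that there is a polynomial $S$ in the variables $(f(u))_{u\in\mathcal U}$ which is a sum of squares of polynomials, of degree at most $4$, with the polynomial identity $\|\Pi_{V'}f\|_4^4=c^4\|\Pi_{V'}f\|_2^4-S(f)$. Let $f_0\in\mathbb{R}^{\mathcal U}$ be orthogonal to $V'$ with $\|f_0\|_2=1$ and $\|f_0\|_4=C>100c$, and let $V=\mathrm{span}(V'\cup\{f_0\})$. Let $\tilde{\mathbb{E}}$ be a level-$\ell$ pseudoexpectation, $\ell\ge8$, over the variables $(f(u))_{u\in\mathcal U}$ such that: $\tilde{\mathbb{E}}[L(f)Q(f)]=0$ for every linear form $L$ vanishing on $V$ and every polynomial $Q$ of degree at most $\ell-1$; $\tilde{\mathbb{E}}[(\|f\|_2^2-1)Q(f)]=0$ for every polynomial $Q$ of degree at most $\ell-2$; and $\tilde{\mathbb{E}}\|f\|_4^4\ge C^4$. Then $\tilde{\mathbb{E}}\langle f,f_0\rangle^2\ge1-Kc/C$. (In particular this holds when $\tilde{\mathbb{E}}$ is the expectation of a probability distribution over unit-norm $f\in V$ with $\|f\|_4\ge C$.)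
   Context: Norms and inner products on $\mathbb{R}^{\mathcal U}$ use the uniform (expectation) measure: $\langle g,h\rangle=\mathbb{E}_{u}g(u)h(u)$, $\|g\|_p=(\mathbb{E}_u|g(u)|^p)^{1/p}$. A level-$\ell$ pseudoexpectation is a linear functional $\tilde{\mathbb{E}}$ on real polynomials of degree at most $\ell$ in the given variables such that $\tilde{\mathbb{E}}1=1$ and $\tilde{\mathbb{E}}P^2\ge0$ for every polynomial $P$ of degree at most $\ell/2$. *)

theory Defs
  imports "HOL-Analysis.Analysis"
begin

text \<open>The finite index set U is represented as a finite set of naturals (any finite set can be
relabelled this way); vectors in R^U are functions nat => real, of which only the values on U matter.
Norms and inner products use the uniform (expectation) measure on U.\<close>

definition ipU :: "nat set \<Rightarrow> (nat \<Rightarrow> real) \<Rightarrow> (nat \<Rightarrow> real) \<Rightarrow> real" where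
  "ipU U g h = (\<Sum>u\<in>U. g u * h u) / real (card U)"

definition norm2U :: "nat set \<Rightarrow> (nat \<Rightarrow> real) \<Rightarrow> real" where
  "norm2U U g = sqrt ((\<Sum>u\<in>U. (g u)^2) / real (card U))"

definition norm4U :: "nat set \<Rightarrow> (nat \<Rightarrow> real) \<Rightarrow> real" where
  "norm4U U g = root 4 ((\<Sum>u\<in>U. (g u)^4) / real (card U))"

definition RU :: "nat set \<Rightarrow> (nat \<Rightarrow> real) set" where
  "RU U = {g. \<forall>u. u \<notin> U \<longrightarrow> g u = 0}"

definition subspaceF :: "(nat \<Rightarrow> real) set \<Rightarrow> bool" where
  "subspaceF W \<longleftrightarrow> (\<lambda>u. 0) \<in> W \<and>
     (\<forall>g\<in>W. \<forall>h\<in>W. (\<lambda>u. g u + h u) \<in> W) \<and> (\<forall>t. \<forall>g\<in>W. (\<lambda>u. t * g u) \<in> W)"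

definition spanF :: "(nat \<Rightarrow> real) set \<Rightarrow> (nat \<Rightarrow> real) set" where
  "spanF S = {g. \<exists>A a. finite A \<and> A \<subseteq> S \<and> g = (\<lambda>u. \<Sum>v\<in>A. a v * v u)}"

definition projU :: "nat set \<Rightarrow> (nat \<Rightarrow> real) set \<Rightarrow> (nat \<Rightarrow> real) \<Rightarrow> (nat \<Rightarrow> real)" where
  "projU U W f = (THE g. g \<in> W \<and> (\<forall>w\<in>W. ipU U (\<lambda>u. f u - g u) w = 0))"

definition polyfun :: "nat set \<Rightarrow> nat \<Rightarrow> ((nat \<Rightarrow> real) \<Rightarrow> real) \<Rightarrow> bool" where
  "polyfun U d p \<longleftrightarrow> (\<exists>A (a :: (nat \<Rightarrow> nat) \<Rightarrow> real). finite A \<and>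
      (\<forall>\<alpha>\<in>A. (\<Sum>u\<in>U. \<alpha> u) \<le> d) \<and>
      p = (\<lambda>x. \<Sum>\<alpha>\<in>A. a \<alpha> * (\<Prod>u\<in>U. x u ^ \<alpha> u)))"

text \<open>Level-l pseudoexpectation: linear functional on polynomials of degree at most l
  (values on other functions are irrelevant), normalised, nonnegative on squares of
  polynomials of degree at most l/2.\<close>
definition pseudoexp :: "nat set \<Rightarrow> nat \<Rightarrow> (((nat \<Rightarrow> real) \<Rightarrow> real) \<Rightarrow> real) \<Rightarrow> bool" where
  "pseudoexp U l E \<longleftrightarrow>
     (\<forall>p q a b. polyfun U l p \<longrightarrow> polyfun U l q \<longrightarrow>
         E (\<lambda>x. a * p x + b * q x) = a * E p + b * E q) \<and>
     E (\<lambda>x. 1) = 1 \<and>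
     (\<forall>P. polyfun U (l div 2) P \<longrightarrow> E (\<lambda>x. (P x)^2) \<ge> 0)"

end

theory Submission
  imports Defs "HOL-Computational_Algebra.Polynomial"
begin


definition mon :: "nat set \<Rightarrow> (nat\<Rightarrow>nat) \<Rightarrow> (nat\<Rightarrow>real) \<Rightarrow> real" where
  "mon U \<alpha> x = (\<Prod>u\<in>U. x u ^ \<alpha> u)"

lemma polyfun_iff: "polyfun U d p \<longleftrightarrow> (\<exists>A a. finite A \<and> (\<forall>\<alpha>\<in>A. sum \<alpha> U \<le> d) \<and>
   p = (\<lambda>x. \<Sum>\<alpha>\<in>A. a \<alpha> * mon U \<alpha> x))"
  by (simp add: polyfun_def mon_def)

lemma polyfun_mono: "polyfun U d p \<Longrightarrow> d \<le> d' \<Longrightarrow> polyfun U d' p"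
  unfolding polyfun_iff by (metis order_trans)

lemma polyfun_const: "polyfun U d (\<lambda>x. c)"
  unfolding polyfun_iff
  by (rule exI[of _ "{\<lambda>_. 0}"], rule exI[of _ "\<lambda>_. c"]) (simp add: mon_def)

lemma polyfun_var: assumes "u \<in> U" "finite U" "1 \<le> d" shows "polyfun U d (\<lambda>x. x u)"
proof -
  define e where "e = (\<lambda>v::nat. if v = u then 1 else (0::nat))"
  have s: "sum e U = 1" using assms unfolding e_def by simp
  have m: "mon U e x = x u" for x
  proof -
    have "mon U e x = (\<Prod>v\<in>U. if v = u then x u else 1)"
      unfolding mon_def e_def by (rule prod.cong) auto
    also have "\<dots> = x u" using assms by simp
    finally show ?thesis .
  qed
  show ?thesis unfolding polyfun_iff
    by (rule exI[of _ "{e}"], rule exI[of _ "\<lambda>_. 1"]) (use s m assms in auto)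
qed

lemma sum_if_in: fixes m :: "_ \<Rightarrow> real" assumes "finite S" "A \<subseteq> S" shows
   "(\<Sum>\<gamma>\<in>S. (if \<gamma> \<in> A then a \<gamma> else 0) * m \<gamma>) = (\<Sum>\<gamma>\<in>A. a \<gamma> * m \<gamma>)"
proof -
  have "(\<Sum>\<gamma>\<in>S. (if \<gamma> \<in> A then a \<gamma> else 0) * m \<gamma>) = (\<Sum>\<gamma>\<in>S. if \<gamma> \<in> A then a \<gamma> * m \<gamma> else 0)"
    by (rule sum.cong) auto
  also have "\<dots> = (\<Sum>\<gamma>\<in>S \<inter> A. a \<gamma> * m \<gamma>)" using assms(1) by (rule sum.inter_restrict[symmetric])
  finally show ?thesis using Int_absorb1[OF assms(2)] by simp
qed

lemma polyfun_lin: assumes "polyfun U d p" "polyfun U d q"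
  shows "polyfun U d (\<lambda>x. a * p x + b * q x)"
proof -
  obtain A ca where A: "finite A" "\<forall>\<alpha>\<in>A. sum \<alpha> U \<le> d" "p = (\<lambda>x. \<Sum>\<alpha>\<in>A. ca \<alpha> * mon U \<alpha> x)"
    using assms(1) unfolding polyfun_iff by blast
  obtain B cb where B: "finite B" "\<forall>\<alpha>\<in>B. sum \<alpha> U \<le> d" "q = (\<lambda>x. \<Sum>\<alpha>\<in>B. cb \<alpha> * mon U \<alpha> x)"
    using assms(2) unfolding polyfun_iff by blast
  define c where "c = (\<lambda>\<gamma>. a * (if \<gamma> \<in> A then ca \<gamma> else 0) + b * (if \<gamma> \<in> B then cb \<gamma> else 0))"
  have "(\<Sum>\<gamma>\<in>A\<union>B. c \<gamma> * mon U \<gamma> x) = a * p x + b * q x" for x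
  proof -
    have "(\<Sum>\<gamma>\<in>A\<union>B. c \<gamma> * mon U \<gamma> x) = a * (\<Sum>\<gamma>\<in>A\<union>B. (if \<gamma> \<in> A then ca \<gamma> else 0) * mon U \<gamma> x)
       + b * (\<Sum>\<gamma>\<in>A\<union>B. (if \<gamma> \<in> B then cb \<gamma> else 0) * mon U \<gamma> x)"
      unfolding c_def by (simp add: algebra_simps sum.distrib sum_distrib_left)
    also have "\<dots> = a * p x + b * q x"
      using A B by (simp add: sum_if_in)
    finally show ?thesis .
  qed
  then show ?thesis unfolding polyfun_iff
    by (intro exI[of _ "A\<union>B"] exI[of _ c]) (use A B in auto)
qed

lemma polyfun_add: "polyfun U d p \<Longrightarrow> polyfun U d q \<Longrightarrow> polyfun U d (\<lambda>x. p x + q x)"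
  using polyfun_lin[of U d p q 1 1] by simp

lemma polyfun_diff: "polyfun U d p \<Longrightarrow> polyfun U d q \<Longrightarrow> polyfun U d (\<lambda>x. p x - q x)"
  using polyfun_lin[of U d p q 1 "-1"] by simp

lemma polyfun_scale: "polyfun U d p \<Longrightarrow> polyfun U d (\<lambda>x. a * p x)"
  using polyfun_lin[of U d p p a 0] by simp

lemma polyfun_sum: "finite I \<Longrightarrow> (\<And>i. i \<in> I \<Longrightarrow> polyfun U d (F i)) \<Longrightarrow> polyfun U d (\<lambda>x. \<Sum>i\<in>I. F i x)"
proof (induction I rule: finite_induct)
  case empty then show ?case using polyfun_const[of U d 0] by simp
next
  case (insert i I) then show ?case using polyfun_add[of U d "F i" "\<lambda>x. \<Sum>i\<in>I. F i x"] by simp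
qed

lemma polyfun_mult: assumes "polyfun U d1 p" "polyfun U d2 q" "finite U"
  shows "polyfun U (d1 + d2) (\<lambda>x. p x * q x)"
proof -
  obtain A ca where A: "finite A" "\<forall>\<alpha>\<in>A. sum \<alpha> U \<le> d1" "p = (\<lambda>x. \<Sum>\<alpha>\<in>A. ca \<alpha> * mon U \<alpha> x)"
    using assms(1) unfolding polyfun_iff by blast
  obtain B cb where B: "finite B" "\<forall>\<alpha>\<in>B. sum \<alpha> U \<le> d2" "q = (\<lambda>x. \<Sum>\<alpha>\<in>B. cb \<alpha> * mon U \<alpha> x)"
    using assms(2) unfolding polyfun_iff by blast
  define pl where "pl = (\<lambda>(\<alpha>::nat\<Rightarrow>nat, \<beta>::nat\<Rightarrow>nat). (\<lambda>u. \<alpha> u + \<beta> u))"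
  define G where "G = pl ` (A \<times> B)"
  define c where "c = (\<lambda>\<gamma>. \<Sum>z\<in>{z\<in>A\<times>B. pl z = \<gamma>}. ca (fst z) * cb (snd z))"
  have fG: "finite G" unfolding G_def using A B by simp
  have monpl: "mon U (pl z) x = mon U (fst z) x * mon U (snd z) x" for z x
    unfolding mon_def pl_def by (cases z) (simp add: power_add prod.distrib)
  have "(\<Sum>\<gamma>\<in>G. c \<gamma> * mon U \<gamma> x) = p x * q x" for x
  proof -
    have "(\<Sum>\<gamma>\<in>G. c \<gamma> * mon U \<gamma> x) = (\<Sum>\<gamma>\<in>G. \<Sum>z\<in>{z\<in>A\<times>B. pl z = \<gamma>}. ca (fst z) * cb (snd z) * mon U (pl z) x)"
      unfolding c_def by (simp add: sum_distrib_right)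
    also have "\<dots> = (\<Sum>z\<in>A\<times>B. ca (fst z) * cb (snd z) * mon U (pl z) x)"
      using sum.group[of "A\<times>B" G pl "\<lambda>z. ca (fst z) * cb (snd z) * mon U (pl z) x"] A B
      unfolding G_def by simp
    also have "\<dots> = (\<Sum>z\<in>A\<times>B. (ca (fst z) * mon U (fst z) x) * (cb (snd z) * mon U (snd z) x))"
      by (simp add: monpl mult_ac)
    also have "\<dots> = p x * q x"
      unfolding A(3) B(3) by (simp add: sum_product sum.cartesian_product case_prod_beta)
    finally show ?thesis .
  qed
  moreover have "\<forall>\<gamma>\<in>G. sum \<gamma> U \<le> d1 + d2"
    using A B unfolding G_def pl_def by (auto simp: sum.distrib intro: add_mono)
  ultimately show ?thesis unfolding polyfun_iff
    by (intro exI[of _ G] exI[of _ c]) (use fG in auto)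
qed

lemma polyfun_pow: assumes "polyfun U d p" "finite U" shows "polyfun U (n * d) (\<lambda>x. p x ^ n)"
proof (induction n)
  case 0 then show ?case using polyfun_const[of U 0 1] by simp
next
  case (Suc n) then show ?case using polyfun_mult[OF assms(1) Suc assms(2)] by simp
qed

lemma polyfun_mult_le: "polyfun U d1 p \<Longrightarrow> polyfun U d2 q \<Longrightarrow> finite U \<Longrightarrow> d1 + d2 \<le> d
   \<Longrightarrow> polyfun U d (\<lambda>x. p x * q x)"
  using polyfun_mult polyfun_mono by blast

lemma polyfun_pow_le: "polyfun U d1 p \<Longrightarrow> finite U \<Longrightarrow> n * d1 \<le> d \<Longrightarrow> polyfun U d (\<lambda>x. p x ^ n)"
  using polyfun_pow polyfun_mono by blast

lemma polyfun_linform: "finite U \<Longrightarrow> 1 \<le> d \<Longrightarrow> polyfun U d (\<lambda>x. \<Sum>v\<in>U. a v * x v)"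
  by (intro polyfun_sum polyfun_scale polyfun_var) auto


lemma polyfun_sumlist: "(\<And>F. F \<in> set Fs \<Longrightarrow> polyfun U l F) \<Longrightarrow> polyfun U l (\<lambda>x. \<Sum>F\<leftarrow>Fs. F x)"
proof (induction Fs)
  case Nil then show ?case using polyfun_const[of U l 0] by simp
next
  case (Cons G Gs)
  then have "polyfun U l (\<lambda>x. \<Sum>F\<leftarrow>Gs. F x)" "polyfun U l G" by auto
  then show ?case using polyfun_add[of U l G "\<lambda>x. \<Sum>F\<leftarrow>Gs. F x"] by simp
qed

context
  fixes U l E assumes pe: "pseudoexp U l E" and fU: "finite U"
begin

lemma E_lin: "polyfun U l p \<Longrightarrow> polyfun U l q \<Longrightarrow> E (\<lambda>x. a * p x + b * q x) = a * E p + b * E q"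
  using pe unfolding pseudoexp_def by blast

lemma E_one: "E (\<lambda>x. 1) = 1"
  using pe unfolding pseudoexp_def by blast

lemma E_const: "E (\<lambda>x. c) = c"
proof -
  have "E (\<lambda>x. c * 1 + 0 * 1) = c * E (\<lambda>x. 1) + 0 * E (\<lambda>x. 1)"
    by (rule E_lin) (rule polyfun_const)+
  then show ?thesis using E_one by simp
qed

lemma E_add: "polyfun U l p \<Longrightarrow> polyfun U l q \<Longrightarrow> E (\<lambda>x. p x + q x) = E p + E q"
  using E_lin[of p q 1 1] by simp

lemma E_scale: "polyfun U l p \<Longrightarrow> E (\<lambda>x. a * p x) = a * E p"
  using E_lin[of p p a 0] by simp

lemma E_diff: "polyfun U l p \<Longrightarrow> polyfun U l q \<Longrightarrow> E (\<lambda>x. p x - q x) = E p - E q"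
  using E_lin[of p q 1 "-1"] by simp

lemma E_sum: "finite I \<Longrightarrow> (\<And>i. i \<in> I \<Longrightarrow> polyfun U l (F i)) \<Longrightarrow> E (\<lambda>x. \<Sum>i\<in>I. F i x) = (\<Sum>i\<in>I. E (F i))"
proof (induction I rule: finite_induct)
  case empty then show ?case using E_const[of 0] by simp
next
  case (insert i I)
  have "E (\<lambda>x. \<Sum>i\<in>insert i I. F i x) = E (\<lambda>x. F i x + (\<Sum>i\<in>I. F i x))"
    using insert by simp
  also have "\<dots> = E (F i) + E (\<lambda>x. \<Sum>i\<in>I. F i x)"
    using insert by (intro E_add[of "F i" "\<lambda>x. \<Sum>i\<in>I. F i x", simplified]) (auto intro!: polyfun_sum)
  finally show ?case using insert by simp
qed

lemma E_sumlist: "(\<And>F. F \<in> set Fs \<Longrightarrow> polyfun U l F) \<Longrightarrow> E (\<lambda>x. \<Sum>F\<leftarrow>Fs. F x) = (\<Sum>F\<leftarrow>Fs. E F)"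
proof (induction Fs)
  case Nil then show ?case using E_const[of 0] by simp
next
  case (Cons F Fs)
  have pl: "polyfun U l (\<lambda>x. \<Sum>F\<leftarrow>Fs. F x)"
    using Cons.prems polyfun_sumlist[of Fs U l] by simp
  have "E (\<lambda>x. \<Sum>F\<leftarrow>F#Fs. F x) = E (\<lambda>x. F x + (\<Sum>F\<leftarrow>Fs. F x))" by simp
  also have "\<dots> = E F + E (\<lambda>x. \<Sum>F\<leftarrow>Fs. F x)"
    using Cons pl by (intro E_add[of F "\<lambda>x. \<Sum>F\<leftarrow>Fs. F x", simplified]) auto
  finally show ?case using Cons by simp
qed

lemma E_sq: "polyfun U (l div 2) P \<Longrightarrow> E (\<lambda>x. (P x)^2) \<ge> 0"
  using pe unfolding pseudoexp_def by blast

lemma E_sos: assumes "finite I" "\<And>i. i \<in> I \<Longrightarrow> w i \<ge> 0" "\<And>i. i \<in> I \<Longrightarrow> polyfun U (l div 2) (P i)"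
  shows "E (\<lambda>x. \<Sum>i\<in>I. w i * (P i x)^2) \<ge> 0"
proof -
  have pf: "polyfun U l (\<lambda>x. (P i x)^2)" if "i \<in> I" for i
    by (rule polyfun_pow_le[OF assms(3)[OF that] fU]) simp
  have "E (\<lambda>x. \<Sum>i\<in>I. w i * (P i x)^2) = (\<Sum>i\<in>I. E (\<lambda>x. w i * (P i x)^2))"
    using assms(1) by (rule E_sum) (use pf polyfun_scale in blast)
  also have "\<dots> = (\<Sum>i\<in>I. w i * E (\<lambda>x. (P i x)^2))"
    by (rule sum.cong) (auto intro!: E_scale pf)
  also have "\<dots> \<ge> 0"
    by (rule sum_nonneg) (use assms(2,3) E_sq in auto)
  finally show ?thesis .
qed

end


lemma ip_lin_left: "ipU U (\<lambda>u. a * g u + b * h u) w = a * ipU U g w + b * ipU U h w"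
  unfolding ipU_def by (simp add: algebra_simps sum.distrib sum_distrib_left add_divide_distrib)

lemma ip_diff_left: "ipU U (\<lambda>u. g u - h u) w = ipU U g w - ipU U h w"
  using ip_lin_left[of U 1 g "-1" h w] by simp

lemma ip_sym: "ipU U g h = ipU U h g"
  unfolding ipU_def by (simp add: mult.commute)

lemma ip_sum_left: "ipU U (\<lambda>u. \<Sum>i\<in>I. c i * G i u) w = (\<Sum>i\<in>I. c i * ipU U (G i) w)"
  unfolding ipU_def by (simp add: sum_distrib_left sum_distrib_right sum_divide_distrib mult_ac sum.swap[of _ U])

lemma ip_self_zero: assumes "finite U" "ipU U g g = 0" shows "\<forall>u\<in>U. g u = 0"
proof (cases "U = {}")
  case False
  then have "card U > 0" using assms(1) card_gt_0_iff by blast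
  then have "(\<Sum>u\<in>U. g u * g u) = 0" using assms(2) unfolding ipU_def by simp
  then have "\<forall>u\<in>U. g u * g u = 0" using sum_nonneg_eq_0_iff[of U "\<lambda>u. g u * g u"] assms(1) by simp
  then show ?thesis by auto
qed simp

lemma ip_zero_right: assumes "finite U" "ipU U g g = 0" shows "ipU U x g = 0"
proof -
  have "\<forall>u\<in>U. g u = 0" using ip_self_zero[OF assms] .
  then have "(\<Sum>u\<in>U. x u * g u) = 0" by simp
  then show ?thesis unfolding ipU_def by simp
qed


lemma sub_zero: "subspaceF W \<Longrightarrow> (\<lambda>u. 0) \<in> W"
  unfolding subspaceF_def by blast
lemma sub_add: "subspaceF W \<Longrightarrow> g \<in> W \<Longrightarrow> h \<in> W \<Longrightarrow> (\<lambda>u. g u + h u) \<in> W"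
  unfolding subspaceF_def by blast
lemma sub_scale: "subspaceF W \<Longrightarrow> g \<in> W \<Longrightarrow> (\<lambda>u. t * g u) \<in> W"
  unfolding subspaceF_def by blast

lemma subspace_lc: assumes "subspaceF W" "finite I" "\<And>i. i \<in> I \<Longrightarrow> G i \<in> W"
  shows "(\<lambda>u. \<Sum>i\<in>I. c i * G i u) \<in> W"
  using assms(2,3)
proof (induction I rule: finite_induct)
  case empty then show ?case using sub_zero[OF assms(1)] by simp
next
  case (insert i I)
  have "(\<lambda>u. c i * G i u) \<in> W" using sub_scale[OF assms(1)] insert by blast
  moreover have "(\<lambda>u. \<Sum>i\<in>I. c i * G i u) \<in> W" using insert by blast
  ultimately have "(\<lambda>u. c i * G i u + (\<Sum>i\<in>I. c i * G i u)) \<in> W"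
    using sub_add[OF assms(1)] by fastforce
  then show ?case using insert by simp
qed

lemma finite_span: "finite U \<Longrightarrow> W \<subseteq> RU U \<Longrightarrow> subspaceF W \<Longrightarrow> \<exists>B. finite B \<and> B \<subseteq> W \<and> W \<subseteq> spanF B"
proof (induction U arbitrary: W rule: finite_induct)
  case empty
  have "w = (\<lambda>u. 0)" if "w \<in> W" for w using empty that by (auto simp: RU_def)
  then have "W \<subseteq> spanF {}" by (auto simp: spanF_def)
  then show ?case by (intro exI[of _ "{}"]) simp
next
  case (insert u U)
  define W0 where "W0 = {w\<in>W. w u = 0}"
  have W0R: "W0 \<subseteq> RU U"
  proof
    fix w assume "w \<in> W0"
    then have "w \<in> RU (insert u U)" "w u = 0" using insert.prems(1) unfolding W0_def by auto
    then show "w \<in> RU U" unfolding RU_def by auto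
  qed
  have W0s: "subspaceF W0"
  proof -
    have z: "(\<lambda>u. 0) \<in> W0" using sub_zero[OF insert.prems(2)] unfolding W0_def by simp
    have a: "(\<lambda>x. g x + h x) \<in> W0" if "g \<in> W0" "h \<in> W0" for g h
      using that sub_add[OF insert.prems(2), of g h] unfolding W0_def by simp
    have s: "(\<lambda>x. t * g x) \<in> W0" if "g \<in> W0" for g t
      using that sub_scale[OF insert.prems(2), of g t] unfolding W0_def by simp
    show ?thesis unfolding subspaceF_def
    proof (intro conjI ballI allI)
      show "(\<lambda>u. 0) \<in> W0" by (rule z)
    next
      fix g h assume "g \<in> W0" "h \<in> W0"
      then show "(\<lambda>x. g x + h x) \<in> W0" by (rule a)
    next
      fix t g assume "g \<in> W0"
      then show "(\<lambda>x. t * g x) \<in> W0" by (rule s)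
    qed
  qed
  obtain B0 where B0: "finite B0" "B0 \<subseteq> W0" "W0 \<subseteq> spanF B0" using insert.IH[OF W0R W0s] by blast
  show ?case
  proof (cases "\<exists>w1\<in>W. w1 u \<noteq> 0")
    case False
    then have "W \<subseteq> W0" unfolding W0_def by auto
    then show ?thesis using B0 unfolding W0_def by blast
  next
    case True
    then obtain w1 where w1: "w1 \<in> W" "w1 u \<noteq> 0" by blast
    define e where "e = (\<lambda>v. (1 / w1 u) * w1 v)"
    have eW: "e \<in> W" unfolding e_def by (rule sub_scale[OF insert.prems(2) w1(1)])
    have eu: "e u = 1" using w1 unfolding e_def by simp
    have "W \<subseteq> spanF (insert e B0)"
    proof
      fix w assume w: "w \<in> W"
      define w' where "w' = (\<lambda>v. w v + (- w u) * e v)"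
      have "(\<lambda>v. (- w u) * e v) \<in> W" by (rule sub_scale[OF insert.prems(2) eW])
      then have "w' \<in> W" unfolding w'_def using sub_add[OF insert.prems(2) w] by blast
      moreover have "w' u = 0" unfolding w'_def using eu by simp
      ultimately have "w' \<in> W0" unfolding W0_def by blast
      then have "w' \<in> spanF B0" using B0(3) by blast
      then obtain A a where A: "finite A" "A \<subseteq> B0" "w' = (\<lambda>v. \<Sum>x\<in>A. a x * x v)"
        unfolding spanF_def by blast
      have "e \<notin> A"
      proof
        assume "e \<in> A"
        then have "e \<in> W0" using A(2) B0(2) by blast
        then show False using eu unfolding W0_def by simp
      qed
      define a' where "a' = a(e := w u)"
      have "(\<lambda>v. \<Sum>x\<in>insert e A. a' x * x v) = (\<lambda>v. w u * e v + (\<Sum>x\<in>A. a x * x v))"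
      proof
        fix v
        have "(\<Sum>x\<in>A. a' x * x v) = (\<Sum>x\<in>A. a x * x v)"
          using \<open>e \<notin> A\<close> unfolding a'_def by (intro sum.cong) auto
        then show "(\<Sum>x\<in>insert e A. a' x * x v) = w u * e v + (\<Sum>x\<in>A. a x * x v)"
          using A(1) \<open>e \<notin> A\<close> unfolding a'_def by simp
      qed
      also have "\<dots> = w"
      proof
        fix v
        have "w' v = (\<Sum>x\<in>A. a x * x v)" using A(3) by simp
        then show "w u * e v + (\<Sum>x\<in>A. a x * x v) = w v" unfolding w'_def by simp
      qed
      finally have "w = (\<lambda>v. \<Sum>x\<in>insert e A. a' x * x v)" by simp
      moreover have "finite (insert e A)" "insert e A \<subseteq> insert e B0" using A by auto
      ultimately show "w \<in> spanF (insert e B0)" unfolding spanF_def by blast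
    qed
    moreover have "insert e B0 \<subseteq> W" using eW B0(2) unfolding W0_def by auto
    ultimately show ?thesis using B0(1) by blast
  qed
qed

lemma proj_exists_fin: assumes fU: "finite U" and fB: "finite B"
  shows "\<forall>f. \<exists>c. \<forall>b\<in>B. ipU U (\<lambda>u. f u - (\<Sum>v\<in>B. c v * v u)) b = 0"
  using fB
proof (induction B rule: finite_induct)
  case empty then show ?case unfolding ipU_def by simp
next
  case (insert b B)
  obtain cf where cf0: "\<forall>f. \<forall>b'\<in>B. ipU U (\<lambda>u. f u - (\<Sum>v\<in>B. cf f v * v u)) b' = 0"
    using choice[OF insert.IH] by blast
  have cf: "\<And>f b'. b' \<in> B \<Longrightarrow> ipU U (\<lambda>u. f u - (\<Sum>v\<in>B. cf f v * v u)) b' = 0"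
    using cf0 by blast
  show ?case
  proof
    fix f
    define c1 where "c1 = cf f"
    define c2 where "c2 = cf b"
    define b' where "b' = (\<lambda>u. b u - (\<Sum>v\<in>B. c2 v * v u))"
    define r1 where "r1 = (\<lambda>u. f u - (\<Sum>v\<in>B. c1 v * v u))"
    define lam where "lam = ipU U r1 b' / ipU U b' b'"
    define c where "c = (\<lambda>v. if v = b then lam else c1 v - lam * c2 v)"
    define r where "r = (\<lambda>u. f u - (\<Sum>v\<in>insert b B. c v * v u))"
    have rr: "r = (\<lambda>u. 1 * r1 u + (- lam) * b' u)"
    proof
      fix u
      have "(\<Sum>v\<in>B. c v * v u) = (\<Sum>v\<in>B. (c1 v - lam * c2 v) * v u)"
        using insert(2) unfolding c_def by (intro sum.cong) auto
      also have "\<dots> = (\<Sum>v\<in>B. c1 v * v u) - lam * (\<Sum>v\<in>B. c2 v * v u)"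
        by (simp add: sum_subtractf sum_distrib_left left_diff_distrib mult.assoc)
      finally have "(\<Sum>v\<in>B. c v * v u) = (\<Sum>v\<in>B. c1 v * v u) - lam * (\<Sum>v\<in>B. c2 v * v u)" .
      then show "r u = 1 * r1 u + (- lam) * b' u"
        unfolding r_def r1_def b'_def using insert(1,2) by (simp add: c_def algebra_simps)
    qed
    have r1B: "\<forall>x\<in>B. ipU U r1 x = 0" using cf unfolding r1_def c1_def by blast
    have b'B: "\<forall>x\<in>B. ipU U b' x = 0" using cf unfolding b'_def c2_def by blast
    have rB: "\<forall>x\<in>B. ipU U r x = 0" unfolding rr ip_lin_left using r1B b'B by simp
    have rb': "ipU U r b' = 0"
    proof (cases "ipU U b' b' = 0")
      case True then show ?thesis using ip_zero_right[OF fU True] by simp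
    next
      case False then show ?thesis unfolding rr ip_lin_left lam_def by simp
    qed
    have bfun: "b = (\<lambda>u. 1 * b' u + 1 * (\<Sum>v\<in>B. c2 v * v u))" unfolding b'_def by simp
    have z1: "ipU U b' r = 0" using rb' ip_sym[of U b' r] by simp
    have z2: "ipU U v r = 0" if "v \<in> B" for v using rB that ip_sym[of U v r] by simp
    have "ipU U r b = ipU U b r" by (rule ip_sym)
    also have "\<dots> = 1 * ipU U b' r + 1 * ipU U (\<lambda>u. \<Sum>v\<in>B. c2 v * v u) r"
      by (subst bfun, rule ip_lin_left)
    also have "\<dots> = (\<Sum>v\<in>B. c2 v * ipU U v r)" using z1 by (simp add: ip_sum_left)
    also have "\<dots> = 0" using z2 by simp
    finally have "ipU U r b = 0" .
    then show "\<exists>c. \<forall>x\<in>insert b B. ipU U (\<lambda>u. f u - (\<Sum>v\<in>insert b B. c v * v u)) x = 0"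
      using rB unfolding r_def by (intro exI[of _ c]) auto
  qed
qed


lemma sum_delta_mult: assumes "finite U" "v \<in> U"
  shows "(\<Sum>u\<in>U. (if u = v then 1 else 0) * (w u::real)) = w v"
proof -
  have "(\<Sum>u\<in>U. (if u = v then 1 else 0) * w u) = (\<Sum>u\<in>U. if u = v then w u else 0)"
    by (rule sum.cong) auto
  then show ?thesis using assms by simp
qed

context fixes U V assumes fU: "finite U" and VR: "V \<subseteq> RU U" and sV: "subspaceF V"
begin

lemma proj_uniq_aux:
  assumes g: "g1 \<in> V" "g2 \<in> V" "\<forall>w\<in>V. ipU U (\<lambda>u. f u - g1 u) w = 0" "\<forall>w\<in>V. ipU U (\<lambda>u. f u - g2 u) w = 0"
  shows "g1 = g2"
proof -
  define d where "d = (\<lambda>u. g1 u + (-1) * g2 u)"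
  have "(\<lambda>u. (-1) * g2 u) \<in> V" by (rule sub_scale[OF sV g(2)])
  from sub_add[OF sV g(1) this] have dV: "d \<in> V" unfolding d_def .
  have de: "(\<lambda>u. 1 * (f u - g2 u) + (-1) * (f u - g1 u)) = d" unfolding d_def by auto
  have "ipU U d d = 1 * ipU U (\<lambda>u. f u - g2 u) d + (-1) * ipU U (\<lambda>u. f u - g1 u) d"
    using ip_lin_left[of U 1 "\<lambda>u. f u - g2 u" "-1" "\<lambda>u. f u - g1 u" d] unfolding de .
  also have "\<dots> = 0" using g(3,4) dV by simp
  finally have "ipU U d d = 0" .
  then have z: "\<forall>u\<in>U. d u = 0" using ip_self_zero[OF fU] by blast
  have o: "\<forall>u. u \<notin> U \<longrightarrow> g1 u = 0 \<and> g2 u = 0" using g VR unfolding RU_def by blast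
  show ?thesis
  proof
    fix u show "g1 u = g2 u"
    proof (cases "u \<in> U")
      case True then show ?thesis using z unfolding d_def by fastforce
    next
      case False then show ?thesis using o by simp
    qed
  qed
qed

lemma proj_ex: "\<exists>g. g \<in> V \<and> (\<forall>w\<in>V. ipU U (\<lambda>u. f u - g u) w = 0)"
proof -
  obtain B where B: "finite B" "B \<subseteq> V" "V \<subseteq> spanF B" using finite_span[OF fU VR sV] by blast
  obtain c where c: "\<forall>b\<in>B. ipU U (\<lambda>u. f u - (\<Sum>v\<in>B. c v * v u)) b = 0"
    using proj_exists_fin[OF fU B(1)] by blast
  define g where "g = (\<lambda>u. \<Sum>v\<in>B. c v * v u)"
  have "g \<in> V" unfolding g_def by (rule subspace_lc[OF sV B(1)]) (use B(2) in blast)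
  moreover have "ipU U (\<lambda>u. f u - g u) w = 0" if "w \<in> V" for w
  proof -
    have "w \<in> spanF B" using that B(3) by blast
    then obtain A a where A: "finite A" "A \<subseteq> B" "w = (\<lambda>u. \<Sum>x\<in>A. a x * x u)"
      unfolding spanF_def by blast
    have "ipU U (\<lambda>u. f u - g u) w = ipU U w (\<lambda>u. f u - g u)" by (rule ip_sym)
    also have "\<dots> = (\<Sum>x\<in>A. a x * ipU U x (\<lambda>u. f u - g u))"
      unfolding A(3) using ip_sum_left[where c=a and I=A and G="\<lambda>i. i" and U=U] by simp
    also have "\<dots> = 0"
    proof (rule sum.neutral, rule ballI)
      fix x assume x: "x \<in> A"
      have "ipU U (\<lambda>u. f u - g u) x = 0" using c A(2) x unfolding g_def by blast
      then show "a x * ipU U x (\<lambda>u. f u - g u) = 0" using ip_sym[of U x "\<lambda>u. f u - g u"] by simp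
    qed
    finally show ?thesis .
  qed
  ultimately show ?thesis by blast
qed

lemma proj_props: "projU U V f \<in> V \<and> (\<forall>w\<in>V. ipU U (\<lambda>u. f u - projU U V f u) w = 0)"
proof -
  obtain g where g: "g \<in> V \<and> (\<forall>w\<in>V. ipU U (\<lambda>u. f u - g u) w = 0)" using proj_ex by blast
  have "\<exists>!g. g \<in> V \<and> (\<forall>w\<in>V. ipU U (\<lambda>u. f u - g u) w = 0)"
  proof (rule ex1I[of _ g])
    show "g \<in> V \<and> (\<forall>w\<in>V. ipU U (\<lambda>u. f u - g u) w = 0)" by (rule g)
    fix g' assume "g' \<in> V \<and> (\<forall>w\<in>V. ipU U (\<lambda>u. f u - g' u) w = 0)"
    then show "g' = g" using proj_uniq_aux[of g' g f] g by blast
  qed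
  then show ?thesis unfolding projU_def by (rule theI')
qed

lemma proj_unique: "g \<in> V \<Longrightarrow> (\<forall>w\<in>V. ipU U (\<lambda>u. f u - g u) w = 0) \<Longrightarrow> projU U V f = g"
  using proj_props[of f] proj_uniq_aux[of "projU U V f" g f] by blast

lemma proj_on_V: "w \<in> V \<Longrightarrow> projU U V w = w"
  by (rule proj_unique) (auto simp: ipU_def)

lemma proj_perp: "(\<forall>w\<in>V. ipU U f w = 0) \<Longrightarrow> projU U V f = (\<lambda>u. 0)"
  using sV by (intro proj_unique) (auto simp: subspaceF_def)

lemma proj_formula: "projU U V f = (\<lambda>u. \<Sum>v\<in>U. f v * projU U V (\<lambda>w. if w = v then 1 else 0) u)"
proof (rule proj_unique)
  let ?d = "\<lambda>v. (\<lambda>w. if w = v then (1::real) else 0)"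
  show "(\<lambda>u. \<Sum>v\<in>U. f v * projU U V (?d v) u) \<in> V"
    using subspace_lc[OF sV fU, of "\<lambda>v. projU U V (?d v)" f] proj_props by blast
  show "\<forall>w\<in>V. ipU U (\<lambda>u. f u - (\<Sum>v\<in>U. f v * projU U V (?d v) u)) w = 0"
  proof
    fix w assume w: "w \<in> V"
    have e: "ipU U (projU U V (?d v)) w = w v / real (card U)" if "v \<in> U" for v
    proof -
      have "\<forall>w\<in>V. ipU U (\<lambda>u. ?d v u - projU U V (?d v) u) w = 0" using proj_props[of "?d v"] by blast
      then have "ipU U (\<lambda>u. ?d v u - projU U V (?d v) u) w = 0" using w by blast
      then have "ipU U (projU U V (?d v)) w = ipU U (?d v) w" by (simp add: ip_diff_left)
      also have "\<dots> = w v / real (card U)" unfolding ipU_def using sum_delta_mult[OF fU that] by simp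
      finally show ?thesis .
    qed
    have s: "(\<Sum>v\<in>U. f v * ipU U (projU U V (?d v)) w) = (\<Sum>v\<in>U. f v * (w v / real (card U)))"
      by (rule sum.cong) (simp_all add: e)
    have "ipU U (\<lambda>u. f u - (\<Sum>v\<in>U. f v * projU U V (?d v) u)) w
        = ipU U f w - (\<Sum>v\<in>U. f v * ipU U (projU U V (?d v)) w)"
      by (simp only: ip_diff_left ip_sum_left)
    also have "\<dots> = ipU U f w - (\<Sum>v\<in>U. f v * (w v / real (card U)))"
      by (simp only: s)
    also have "\<dots> = 0" unfolding ipU_def by (simp add: sum_divide_distrib)
    finally show "ipU U (\<lambda>u. f u - (\<Sum>v\<in>U. f v * projU U V (?d v) u)) w = 0" .
  qed
qed

end


lemma poly_sum_list_map: "poly (\<Sum>x\<leftarrow>xs. F x) r = (\<Sum>x\<leftarrow>xs. poly (F x) r)"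
  by (induction xs) auto

lemma pos_lead_add:
  fixes a b :: "real poly"
  assumes "a = 0 \<or> lead_coeff a > 0" "b = 0 \<or> lead_coeff b > 0"
  shows "(a + b = 0 \<or> lead_coeff (a + b) > 0) \<and> degree (a + b) = max (degree a) (degree b)"
proof (cases "a = 0 \<or> b = 0")
  case True then show ?thesis using assms by auto
next
  case False
  then have la: "lead_coeff a > 0" and lb: "lead_coeff b > 0" using assms by auto
  consider "degree a < degree b" | "degree b < degree a" | "degree a = degree b" by linarith
  then show ?thesis
  proof cases
    case 1
    have "lead_coeff (a + b) = lead_coeff b" using 1 by (simp add: degree_add_eq_right coeff_eq_0)
    then show ?thesis using 1 lb by (simp add: degree_add_eq_right)
  next
    case 2
    have "lead_coeff (a + b) = lead_coeff a" using 2 by (simp add: degree_add_eq_left coeff_eq_0)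
    then show ?thesis using 2 la by (simp add: degree_add_eq_left)
  next
    case 3
    have c: "coeff (a + b) (degree a) = lead_coeff a + lead_coeff b" using 3 by simp
    then have "degree a \<le> degree (a + b)" using la lb by (intro le_degree) simp
    moreover have "degree (a + b) \<le> degree a" using 3 by (intro degree_add_le) auto
    ultimately have d: "degree (a + b) = degree a" by simp
    then show ?thesis using c la lb 3 by simp
  qed
qed

lemma sos_deg_aux:
  fixes ps :: "real poly list"
  shows "((\<Sum>p\<leftarrow>ps. p * p) = 0 \<or> lead_coeff (\<Sum>p\<leftarrow>ps. p * p) > 0) \<and>
         (\<forall>p\<in>set ps. 2 * degree p \<le> degree (\<Sum>p\<leftarrow>ps. p * p))"
proof (induction ps)
  case Nil then show ?case by simp
next
  case (Cons p ps)
  have pp: "p * p = 0 \<or> lead_coeff (p * p) > 0"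
  proof (cases "p = 0")
    case False
    then have "lead_coeff p \<noteq> 0" by simp
    then have "0 < lead_coeff p * lead_coeff p" using not_real_square_gt_zero[of "lead_coeff p"] by blast
    then show ?thesis by (simp add: lead_coeff_mult)
  qed simp
  have dp: "degree (p * p) = 2 * degree p"
    by (cases "p = 0") (auto simp: degree_mult_eq)
  from pos_lead_add[OF pp Cons.IH[THEN conjunct1]] Cons.IH dp show ?case by auto
qed

lemma line_poly:
  assumes "polyfun U d q"
  shows "\<exists>\<Phi>. (\<forall>x r. poly (\<Phi> x) r = q (\<lambda>u. r * x u)) \<and> (\<forall>x. degree (\<Phi> x) \<le> d) \<and>
             ((\<forall>x. degree (\<Phi> x) \<le> 2) \<longrightarrow> polyfun U 2 q)"
proof -
  obtain A a where A: "finite A" "\<forall>\<alpha>\<in>A. sum \<alpha> U \<le> d" "q = (\<lambda>x. \<Sum>\<alpha>\<in>A. a \<alpha> * mon U \<alpha> x)"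
    using assms unfolding polyfun_iff by blast
  define \<Phi> where "\<Phi> = (\<lambda>x. \<Sum>\<alpha>\<in>A. monom (a \<alpha> * mon U \<alpha> x) (sum \<alpha> U))"
  have mr: "mon U \<alpha> (\<lambda>u. r * x u) = mon U \<alpha> x * r ^ sum \<alpha> U" for \<alpha> r x
    unfolding mon_def by (simp add: power_mult_distrib prod.distrib power_sum mult.commute)
  have P1: "poly (\<Phi> x) r = q (\<lambda>u. r * x u)" for x r
    unfolding \<Phi>_def A(3) by (simp add: poly_sum poly_monom mr mult_ac)
  have P2: "degree (\<Phi> x) \<le> d" for x
    unfolding \<Phi>_def using A by (intro degree_sum_le) (auto intro: order_trans[OF degree_monom_le])
  have P3: "polyfun U 2 q" if deg: "\<forall>x. degree (\<Phi> x) \<le> 2"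
  proof -
    define A2 where "A2 = {\<alpha>\<in>A. sum \<alpha> U \<le> 2}"
    define \<Phi>2 where "\<Phi>2 = (\<lambda>x. \<Sum>\<alpha>\<in>A2. monom (a \<alpha> * mon U \<alpha> x) (sum \<alpha> U))"
    have fA2: "finite A2" "A2 \<subseteq> A" using A(1) unfolding A2_def by auto
    have eq: "\<Phi> x = \<Phi>2 x" for x
    proof (rule poly_eqI)
      fix k
      show "coeff (\<Phi> x) k = coeff (\<Phi>2 x) k"
      proof (cases "k \<le> 2")
        case True
        show ?thesis unfolding \<Phi>_def \<Phi>2_def coeff_sum coeff_monom
          by (rule sum.mono_neutral_right[OF A(1) fA2(2)]) (use True in \<open>auto simp: A2_def\<close>)
      next
        case False
        then have "coeff (\<Phi> x) k = 0" using deg by (intro coeff_eq_0) (meson le_trans not_le)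
        moreover have "coeff (\<Phi>2 x) k = 0" unfolding \<Phi>2_def coeff_sum coeff_monom
          using False by (intro sum.neutral) (auto simp: A2_def)
        ultimately show ?thesis by simp
      qed
    qed
    have "q = (\<lambda>x. \<Sum>\<alpha>\<in>A2. a \<alpha> * mon U \<alpha> x)"
    proof
      fix x
      have "q x = poly (\<Phi> x) 1" using P1[of x 1] by simp
      also have "\<dots> = poly (\<Phi>2 x) 1" by (simp add: eq)
      also have "\<dots> = (\<Sum>\<alpha>\<in>A2. a \<alpha> * mon U \<alpha> x)" unfolding \<Phi>2_def by (simp add: poly_sum poly_monom)
      finally show "q x = (\<Sum>\<alpha>\<in>A2. a \<alpha> * mon U \<alpha> x)" .
    qed
    then show ?thesis unfolding polyfun_iff using fA2 by (intro exI[of _ A2] exI[of _ a]) (auto simp: A2_def)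
  qed
  show ?thesis using P1 P2 P3 by blast
qed

lemma sos_deg_q:
  assumes "\<forall>q\<in>set qs. \<exists>d. polyfun U d q" "polyfun U 4 (\<lambda>f. \<Sum>q\<leftarrow>qs. (q f)^2)"
  shows "\<forall>q\<in>set qs. polyfun U 2 q"
proof -
  have "\<forall>q\<in>set qs. \<exists>\<Phi>. (\<forall>x r. poly (\<Phi> x) r = q (\<lambda>u. r * x u)) \<and>
             ((\<forall>x. degree (\<Phi> x) \<le> 2) \<longrightarrow> polyfun U 2 q)"
    using assms(1) line_poly by blast
  from bchoice[OF this] obtain \<Phi> where \<Phi>0: "\<forall>q\<in>set qs. (\<forall>x r. poly (\<Phi> q x) r = q (\<lambda>u. r * x u)) \<and>
             ((\<forall>x. degree (\<Phi> q x) \<le> 2) \<longrightarrow> polyfun U 2 q)"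
    by blast
  have \<Phi>: "\<And>q. q \<in> set qs \<Longrightarrow> (\<forall>x r. poly (\<Phi> q x) r = q (\<lambda>u. r * x u)) \<and>
             ((\<forall>x. degree (\<Phi> q x) \<le> 2) \<longrightarrow> polyfun U 2 q)"
    using \<Phi>0 by blast
  obtain \<Psi> where \<Psi>: "\<forall>x r. poly (\<Psi> x) r = (\<Sum>q\<leftarrow>qs. (q (\<lambda>u. r * x u))^2)" "\<forall>x. degree (\<Psi> x) \<le> 4"
    using line_poly[OF assms(2)] by blast
  show ?thesis
  proof
    fix q assume q: "q \<in> set qs"
    have "degree (\<Phi> q x) \<le> 2" for x
    proof -
      have "poly (\<Sum>p\<leftarrow>map (\<lambda>q. \<Phi> q x) qs. p * p) = poly (\<Psi> x)"
      proof
        fix r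
        have "poly (\<Sum>p\<leftarrow>map (\<lambda>q. \<Phi> q x) qs. p * p) r = (\<Sum>q\<leftarrow>qs. (poly (\<Phi> q x) r)^2)"
          by (simp add: poly_sum_list_map o_def power2_eq_square)
        also have "\<dots> = (\<Sum>q\<leftarrow>qs. (q (\<lambda>u. r * x u))^2)"
          by (rule arg_cong[of _ _ sum_list], rule map_cong) (use \<Phi> in auto)
        also have "\<dots> = poly (\<Psi> x) r" using \<Psi> by simp
        finally show "poly (\<Sum>p\<leftarrow>map (\<lambda>q. \<Phi> q x) qs. p * p) r = poly (\<Psi> x) r" .
      qed
      then have "(\<Sum>p\<leftarrow>map (\<lambda>q. \<Phi> q x) qs. p * p) = \<Psi> x" by (simp add: poly_eq_poly_eq_iff)
      then have "2 * degree (\<Phi> q x) \<le> degree (\<Psi> x)"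
        using sos_deg_aux[of "map (\<lambda>q. \<Phi> q x) qs"] q by auto
      then show ?thesis using \<Psi>(2)[rule_format, of x] by linarith
    qed
    then show "polyfun U 2 q" using \<Phi>[OF q] by blast
  qed
qed


lemma sos4: fixes e x y :: real assumes "e > 0" shows
 "(1+e)^3 * x^4 + (1+1/e)^3 * y^4 - (x+y)^4 = (1+e)^2/e * (e*x^2 - (1/e)*y^2)^2 + (1/e^2) * ((e*x - y)^2)^2 + (2/e) * ((x+y)*(e*x - y))^2"
  using assms by (simp add: field_simps) algebra

lemma final_num: fixes c C T :: real assumes "0 < c" "100*c < C" "C^4 \<le> (c+C)^3 * (c*(1-T) + C*T)"
  shows "T \<ge> 1 - 10*c/C"
proof (rule ccontr)
  assume "\<not> ?thesis"
  then have T: "T < 1 - 10*c/C" by simp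
  define d where "d = c / C"
  have Cp: "C > 0" using assms by simp
  have d: "0 < d" "d < 1/100" using assms Cp unfolding d_def by (auto simp: field_simps)
  have c: "c = d * C" unfolding d_def using Cp by simp
  have T': "T < 1 - 10 * d" using T unfolding d_def by simp
  have e1: "c + C = C * (1+d)" unfolding c by (simp add: algebra_simps)
  have e2: "c*(1-T) + C*T = C * (d + (1-d)*T)" unfolding c by (simp add: algebra_simps)
  have "(c+C)^3 * (c*(1-T) + C*T) = C^4 * ((1+d)^3 * (d + (1-d)*T))"
    unfolding e1 e2 by (simp add: power_mult_distrib eval_nat_numeral)
  then have "C^4 \<le> C^4 * ((1+d)^3 * (d + (1-d)*T))" using assms(3) by simp
  then have h: "1 \<le> (1+d)^3 * (d + (1-d)*T)" using Cp by simp
  have "(1-d)*T \<le> (1-d)*(1 - 10*d)" using T' d by (intro mult_left_mono) auto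
  then have "(1+d)^3 * (d + (1-d)*T) \<le> (1+d)^3 * (d + (1-d)*(1-10*d))" using d by (intro mult_left_mono) auto
  also have "\<dots> < 1"
  proof -
    have ex: "(1+d)^3 * (d + (1-d)*(1-10*d)) = 1 - 7*d - 17*d^2 + d^3 + 20*d^4 + 10*d^5"
      by (simp add: algebra_simps eval_nat_numeral)
    have p2: "d^2 \<le> d/100" using d by (simp add: power2_eq_square mult_left_mono)
    have q2: "d^2 \<le> 1/100" using p2 d by simp
    have p3: "d^3 \<le> d/100" using d q2 mult_left_mono[OF q2, of d] by (simp add: power3_eq_cube power2_eq_square)
    have q3: "d^3 \<le> 1/100" using p3 d by simp
    have p4: "d^4 \<le> d/100" using d mult_left_mono[OF q3, of d] by (simp add: eval_nat_numeral)
    have q4: "d^4 \<le> 1/100" using p4 d by simp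
    have p5: "d^5 \<le> d/100" using d mult_left_mono[OF q4, of d] by (simp add: eval_nat_numeral)
    have "d^2 \<ge> 0" by simp
    then show ?thesis unfolding ex using p2 p3 p4 p5 d by linarith
  qed
  finally show False using h by simp
qed

lemma n4gen: "(norm4U U h)^4 = (1 / real (card U)) * (\<Sum>u\<in>U. (h u)^4)"
proof -
  have "(\<Sum>u\<in>U. (h u)^4) / real (card U) \<ge> 0" by (intro divide_nonneg_nonneg sum_nonneg) auto
  then show ?thesis unfolding norm4U_def by (simp add: real_root_pow_pos2)
qed

lemma n2gen: "(norm2U U h)^2 = (1 / real (card U)) * (\<Sum>u\<in>U. (h u)^2)"
proof -
  have "(\<Sum>u\<in>U. (h u)^2) / real (card U) \<ge> 0" by (intro divide_nonneg_nonneg sum_nonneg) auto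
  then show ?thesis unfolding norm2U_def by simp
qed

lemma E_lincomb:
  assumes pe: "pseudoexp U l E" and fU: "finite U" and pf: "\<And>c F. (c, F) \<in> set L \<Longrightarrow> polyfun U l F"
  shows "E (\<lambda>x. \<Sum>(c, F)\<leftarrow>L. c * F x) = (\<Sum>(c, F)\<leftarrow>L. c * E F)"
proof -
  have eq: "(\<Sum>(c, F)\<leftarrow>L. c * F x) = (\<Sum>G\<leftarrow>map (\<lambda>(c, F) x. c * F x) L. G x)" for x
    by (induction L) auto
  have "E (\<lambda>x. \<Sum>(c, F)\<leftarrow>L. c * F x) = E (\<lambda>x. \<Sum>G\<leftarrow>map (\<lambda>(c, F) x. c * F x) L. G x)"
    by (simp only: eq)
  also have "\<dots> = (\<Sum>G\<leftarrow>map (\<lambda>(c, F) x. c * F x) L. E G)"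
    by (rule E_sumlist[OF pe fU]) (auto intro!: polyfun_scale dest: pf)
  also have "\<dots> = (\<Sum>(c, F)\<leftarrow>L. c * E F)"
    by (rule arg_cong[of _ _ sum_list]) (auto intro!: E_scale[OF pe fU] dest: pf)
  finally show ?thesis .
qed


lemma main_bound:
  fixes U :: "nat set" and V' :: "(nat \<Rightarrow> real) set" and c C :: real and f0 :: "nat \<Rightarrow> real"
    and l :: nat and E :: "((nat \<Rightarrow> real) \<Rightarrow> real) \<Rightarrow> real" and qs :: "((nat \<Rightarrow> real) \<Rightarrow> real) list"
  assumes fU: "finite U" and VR: "V' \<subseteq> RU U" and sV: "subspaceF V'" and cpos: "c > 0"
  and qs1: "\<forall>q\<in>set qs. \<exists>d. polyfun U d q" and qs2: "polyfun U 4 (\<lambda>f. \<Sum>q\<leftarrow>qs. (q f)^2)"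
  and hq: "\<forall>f. (norm4U U (projU U V' f))^4 = c^4 * (norm2U U (projU U V' f))^4 - (\<Sum>q\<leftarrow>qs. (q f)^2)"
  and f0V: "\<forall>v\<in>V'. ipU U f0 v = 0" and n2: "norm2U U f0 = 1" and n4: "norm4U U f0 = C"
  and Cc: "C > 100 * c" and l8: "l \<ge> 8" and pe: "pseudoexp U l E"
  and orth: "\<forall>(a::nat \<Rightarrow> real) Q. (\<forall>v\<in>spanF (insert f0 V'). (\<Sum>u\<in>U. a u * v u) = 0) \<longrightarrow>
           polyfun U (l - 1) Q \<longrightarrow> E (\<lambda>f. (\<Sum>u\<in>U. a u * f u) * Q f) = 0"
  and nrm: "\<forall>Q. polyfun U (l - 2) Q \<longrightarrow> E (\<lambda>f. ((norm2U U f)^2 - 1) * Q f) = 0"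
  and big: "E (\<lambda>f. (norm4U U f)^4) \<ge> C^4"
  shows "E (\<lambda>f. (ipU U f f0)^2) \<ge> 1 - 10 * c / C"
proof -
  define N where "N = real (card U)"
  have Npos: "N > 0"
  proof (rule ccontr)
    assume "\<not> N > 0"
    then have "card U = 0" unfolding N_def by simp
    then have "norm2U U f0 = 0" unfolding norm2U_def by simp
    then show False using n2 by simp
  qed
  have Cpos: "C > 0" using Cc cpos by simp
  have f02: "(1/N) * (\<Sum>u\<in>U. (f0 u)^2) = 1" using n2gen[of U f0] n2 unfolding N_def by simp
  have f04: "(1/N) * (\<Sum>u\<in>U. (f0 u)^4) = C^4" using n4gen[of U f0] n4 unfolding N_def by simp
  define P where "P = (\<lambda>f. projU U V' f)"
  define M where "M = (\<lambda>u v. projU U V' (\<lambda>w. if w = v then 1 else 0) u)"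
  have Pf: "P f u = (\<Sum>v\<in>U. M u v * f v)" for f u
  proof -
    have e: "projU U V' f = (\<lambda>u. \<Sum>v\<in>U. f v * projU U V' (\<lambda>w. if w = v then 1 else 0) u)"
      by (rule proj_formula[OF fU VR sV])
    show ?thesis unfolding P_def M_def using fun_cong[OF e, of u] by (simp add: mult.commute)
  qed
  have PV: "P f \<in> V'" for f unfolding P_def using proj_props[OF fU VR sV] by blast
  have Pperp: "(\<Sum>u\<in>U. P f u * f0 u) = 0" for f
  proof -
    have "ipU U f0 (P f) = 0" using f0V PV by blast
    then have "(\<Sum>u\<in>U. f0 u * P f u) = 0" using Npos unfolding ipU_def N_def by simp
    then show ?thesis by (simp add: mult.commute)
  qed
  define t where "t = (\<lambda>f. ipU U f f0)"
  have tf: "t f = (\<Sum>v\<in>U. (f0 v / N) * f v)" for f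
    unfolding t_def ipU_def N_def by (simp add: sum_divide_distrib mult.commute)
  define s where "s = (\<lambda>f. (1/N) * (\<Sum>u\<in>U. (P f u)^2))"
  define g where "g = (\<lambda>u f. P f u + f0 u * t f)"
  define A where "A = (\<lambda>u v. (if v = u then 1 else 0) - M u v - f0 u * (f0 v / N))"
  have hA: "(\<Sum>v\<in>U. A u v * f v) = f u - g u f" if "u \<in> U" for u f
  proof -
    have "(\<Sum>v\<in>U. A u v * f v) = (\<Sum>v\<in>U. (if v = u then 1 else 0) * f v - M u v * f v - f0 u * ((f0 v / N) * f v))"
      unfolding A_def by (rule sum.cong) (simp_all add: algebra_simps)
    also have "\<dots> = (\<Sum>v\<in>U. (if v = u then 1 else 0) * f v) - (\<Sum>v\<in>U. M u v * f v)
       - f0 u * (\<Sum>v\<in>U. (f0 v / N) * f v)"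
      by (simp add: sum_subtractf sum_distrib_left)
    also have "(\<Sum>v\<in>U. (if v = u then 1 else 0) * f v) = f u"
      by (rule sum_delta_mult[OF fU that])
    finally show ?thesis unfolding g_def Pf tf by simp
  qed
  have Pf0: "P f0 = (\<lambda>u. 0)" unfolding P_def by (rule proj_perp[OF fU VR sV f0V])
  have tf0: "t f0 = 1" using f02 unfolding t_def ipU_def N_def by (simp add: power2_eq_square)
  have PonV: "P w = w" if "w \<in> V'" for w unfolding P_def using proj_on_V[OF fU VR sV that] .
  have tV: "t w = 0" if "w \<in> V'" for w unfolding t_def using f0V that ip_sym[of U w f0] by simp
  have van: "\<forall>w\<in>spanF (insert f0 V'). (\<Sum>v\<in>U. A u v * w v) = 0" if u: "u \<in> U" for u
  proof
    fix w assume "w \<in> spanF (insert f0 V')"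
    then obtain B a where B: "finite B" "B \<subseteq> insert f0 V'" "w = (\<lambda>v. \<Sum>x\<in>B. a x * x v)"
      unfolding spanF_def by blast
    have z: "(\<Sum>v\<in>U. A u v * x v) = 0" if "x \<in> insert f0 V'" for x
    proof -
      have "(\<Sum>v\<in>U. A u v * x v) = x u - g u x" using hA[OF u] .
      also have "\<dots> = 0"
        using that Pf0 tf0 PonV tV unfolding g_def by auto
      finally show ?thesis .
    qed
    have "(\<Sum>v\<in>U. A u v * w v) = (\<Sum>v\<in>U. \<Sum>x\<in>B. a x * (A u v * x v))"
      unfolding B(3) by (simp add: sum_distrib_left mult_ac)
    also have "\<dots> = (\<Sum>x\<in>B. \<Sum>v\<in>U. a x * (A u v * x v))" by (rule sum.swap)
    also have "\<dots> = (\<Sum>x\<in>B. a x * (\<Sum>v\<in>U. A u v * x v))" by (simp add: sum_distrib_left)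
    also have "\<dots> = 0" using z B(2) by (auto intro!: sum.neutral)
    finally show "(\<Sum>v\<in>U. A u v * w v) = 0" .
  qed
  have hZ: "E (\<lambda>f. (f u - g u f) * Q f) = 0" if "u \<in> U" "polyfun U (l - 1) Q" for u Q
  proof -
    have o1: "(\<forall>w\<in>spanF (insert f0 V'). (\<Sum>v\<in>U. A u v * w v) = 0) \<longrightarrow> polyfun U (l - 1) Q \<longrightarrow>
        E (\<lambda>f. (\<Sum>v\<in>U. A u v * f v) * Q f) = 0"
      by (rule spec[OF spec[OF orth, of "A u"], of Q])
    have "E (\<lambda>f. (\<Sum>v\<in>U. A u v * f v) * Q f) = 0"
      using o1 van[OF that(1)] that(2) by blast
    moreover have "(\<lambda>f. (\<Sum>v\<in>U. A u v * f v) * Q f) = (\<lambda>f. (f u - g u f) * Q f)"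
      using hA[OF that(1)] by simp
    ultimately show ?thesis by simp
  qed
  have pfv: "polyfun U 1 (\<lambda>f. f u)" if "u \<in> U" for u using polyfun_var[OF that fU] by simp
  have pfP: "polyfun U 1 (\<lambda>f. P f u)" for u
  proof -
    have "(\<lambda>f. P f u) = (\<lambda>f. \<Sum>v\<in>U. M u v * f v)" using Pf by simp
    then show ?thesis using polyfun_linform[OF fU, of 1 "M u"] by simp
  qed
  have pft: "polyfun U 1 t"
  proof -
    have "t = (\<lambda>f. \<Sum>v\<in>U. (f0 v / N) * f v)" using tf by auto
    then show ?thesis using polyfun_linform[OF fU, of 1 "\<lambda>v. f0 v / N"] by simp
  qed
  have pfy: "polyfun U 1 (\<lambda>f. f0 u * t f)" for u by (rule polyfun_scale[OF pft])
  have pfg: "polyfun U 1 (g u)" for u unfolding g_def by (rule polyfun_add[OF pfP pfy])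
  have pfs: "polyfun U 2 s" unfolding s_def
    by (intro polyfun_scale polyfun_sum fU polyfun_pow_le[OF pfP fU]) simp
  have pft2: "polyfun U 2 (\<lambda>f. (t f)^2)" by (rule polyfun_pow_le[OF pft fU]) simp
  have pfc: "polyfun U d (\<lambda>f. k)" for d k by (rule polyfun_const)
  have pfZ0: "polyfun U 2 (\<lambda>f. s f + (t f)^2 - 1)"
    by (intro polyfun_diff polyfun_add pfs pft2 pfc)
  have pfL: "polyfun U l F" if "polyfun U 4 F" for F using polyfun_mono[OF that] l8 by simp
  define G4 where "G4 = (\<lambda>f. (1/N) * (\<Sum>u\<in>U. (g u f)^4))"
  define Q1 where "Q1 = (\<lambda>u f. (1/N) * ((f u)^3 + (f u)^2 * g u f + f u * (g u f)^2 + (g u f)^3))"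
  have pfQ1: "polyfun U 3 (Q1 u)" if "u \<in> U" for u
  proof -
    have a: "polyfun U 3 (\<lambda>f. (f u)^3)" by (rule polyfun_pow_le[OF pfv[OF that] fU]) simp
    have b: "polyfun U 3 (\<lambda>f. (f u)^2 * g u f)"
      by (rule polyfun_mult_le[OF polyfun_pow[OF pfv[OF that] fU] pfg fU]) simp
    have c: "polyfun U 3 (\<lambda>f. f u * (g u f)^2)"
      by (rule polyfun_mult_le[OF pfv[OF that] polyfun_pow[OF pfg fU] fU]) simp
    have d: "polyfun U 3 (\<lambda>f. (g u f)^3)" by (rule polyfun_pow_le[OF pfg fU]) simp
    show ?thesis unfolding Q1_def by (intro polyfun_scale polyfun_add a b c d)
  qed
  have pffg: "polyfun U 1 (\<lambda>f. f u - g u f)" if "u \<in> U" for u by (rule polyfun_diff[OF pfv[OF that] pfg])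
  have pfT1: "polyfun U l (\<lambda>f. (f u - g u f) * Q1 u f)" if "u \<in> U" for u
    by (rule polyfun_mult_le[OF pffg[OF that] pfQ1[OF that] fU]) (use l8 in simp)
  have pfG4: "polyfun U l G4" unfolding G4_def
    by (intro polyfun_scale polyfun_sum fU polyfun_pow_le[OF pfg fU]) (use l8 in simp)
  have id1: "(\<lambda>f. (norm4U U f)^4) = (\<lambda>f. G4 f + (\<Sum>u\<in>U. (f u - g u f) * Q1 u f))"
  proof
    fix f
    have pt: "(f u)^4 = (g u f)^4 + (f u - g u f) * ((f u)^3 + (f u)^2 * g u f + f u * (g u f)^2 + (g u f)^3)" for u
      by (simp add: algebra_simps eval_nat_numeral)
    have s1: "(\<Sum>u\<in>U. (f u)^4) = (\<Sum>u\<in>U. (g u f)^4) + (\<Sum>u\<in>U. (f u - g u f) * ((f u)^3 + (f u)^2 * g u f + f u * (g u f)^2 + (g u f)^3))"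
      unfolding sum.distrib[symmetric] by (rule sum.cong[OF refl], rule pt)
    have "(norm4U U f)^4 = (1/N) * (\<Sum>u\<in>U. (f u)^4)" using n4gen[of U f] unfolding N_def .
    also have "\<dots> = (1/N) * (\<Sum>u\<in>U. (g u f)^4) + (1/N) * (\<Sum>u\<in>U. (f u - g u f) * ((f u)^3 + (f u)^2 * g u f + f u * (g u f)^2 + (g u f)^3))"
      unfolding s1 by (simp add: distrib_left)
    also have "\<dots> = G4 f + (\<Sum>u\<in>U. (f u - g u f) * Q1 u f)"
      unfolding G4_def Q1_def by (simp add: sum_distrib_left mult_ac)
    finally show "(norm4U U f)^4 = G4 f + (\<Sum>u\<in>U. (f u - g u f) * Q1 u f)" .
  qed
  have EF1: "E (\<lambda>f. (norm4U U f)^4) = E G4"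
  proof -
    have "E (\<lambda>f. (norm4U U f)^4) = E G4 + E (\<lambda>f. \<Sum>u\<in>U. (f u - g u f) * Q1 u f)"
      unfolding id1 by (rule E_add[OF pe fU pfG4]) (intro polyfun_sum fU pfT1)
    also have "E (\<lambda>f. \<Sum>u\<in>U. (f u - g u f) * Q1 u f) = (\<Sum>u\<in>U. E (\<lambda>f. (f u - g u f) * Q1 u f))"
      by (rule E_sum[OF pe fU fU]) (rule pfT1)
    also have "\<dots> = 0"
    proof (intro sum.neutral ballI)
      fix u assume u: "u \<in> U"
      have "polyfun U (l - 1) (Q1 u)" by (rule polyfun_mono[OF pfQ1[OF u]]) (use l8 in simp)
      then show "E (\<lambda>f. (f u - g u f) * Q1 u f) = 0" by (rule hZ[OF u])
    qed
    finally show ?thesis by simp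
  qed
  have gsq: "(1/N) * (\<Sum>u\<in>U. (g u f)^2) = s f + (t f)^2" for f
  proof -
    have "(\<Sum>u\<in>U. (g u f)^2) = (\<Sum>u\<in>U. (P f u)^2) + 2 * t f * (\<Sum>u\<in>U. P f u * f0 u) + (t f)^2 * (\<Sum>u\<in>U. (f0 u)^2)"
      unfolding g_def by (simp add: power2_eq_square algebra_simps sum.distrib sum_distrib_left)
    then have "(1/N) * (\<Sum>u\<in>U. (g u f)^2) = s f + (t f)^2 * ((1/N) * (\<Sum>u\<in>U. (f0 u)^2))"
      unfolding s_def Pperp by (simp add: algebra_simps)
    then show ?thesis using f02 by simp
  qed
  have EF2: "E (\<lambda>f. (s f + (t f)^2 - 1) * Q f) = 0" if Q: "polyfun U (l - 2) Q" for Q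
  proof -
    define Q2 where "Q2 = (\<lambda>u f. (1/N) * ((f u + g u f) * Q f))"
    have pfQ2: "polyfun U (l - 1) (Q2 u)" if "u \<in> U" for u
      unfolding Q2_def
      by (intro polyfun_scale polyfun_mult_le[OF polyfun_add[OF pfv[OF that] pfg] Q fU]) (use l8 in simp)
    have pfT2: "polyfun U l (\<lambda>f. (f u - g u f) * Q2 u f)" if "u \<in> U" for u
      by (rule polyfun_mult_le[OF pffg[OF that] pfQ2[OF that] fU]) (use l8 in simp)
    have pfZQ: "polyfun U l (\<lambda>f. (s f + (t f)^2 - 1) * Q f)"
      by (rule polyfun_mult_le[OF pfZ0 Q fU]) (use l8 in simp)
    have id2: "(\<lambda>f. ((norm2U U f)^2 - 1) * Q f) = (\<lambda>f. (s f + (t f)^2 - 1) * Q f + (\<Sum>u\<in>U. (f u - g u f) * Q2 u f))"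
    proof
      fix f
      have pt: "(f u)^2 = (g u f)^2 + (f u - g u f) * (f u + g u f)" for u
        by (simp add: algebra_simps power2_eq_square)
      have s1: "(\<Sum>u\<in>U. (f u)^2) = (\<Sum>u\<in>U. (g u f)^2) + (\<Sum>u\<in>U. (f u - g u f) * (f u + g u f))"
        unfolding sum.distrib[symmetric] by (rule sum.cong[OF refl], rule pt)
      have "(norm2U U f)^2 = (1/N) * (\<Sum>u\<in>U. (f u)^2)" using n2gen[of U f] unfolding N_def .
      also have "\<dots> = (1/N) * (\<Sum>u\<in>U. (g u f)^2) + (1/N) * (\<Sum>u\<in>U. (f u - g u f) * (f u + g u f))"
        unfolding s1 by (simp add: distrib_left)
      also have "\<dots> = s f + (t f)^2 + (1/N) * (\<Sum>u\<in>U. (f u - g u f) * (f u + g u f))"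
        using gsq by simp
      finally have "((norm2U U f)^2 - 1) * Q f = (s f + (t f)^2 - 1) * Q f + (1/N) * (\<Sum>u\<in>U. (f u - g u f) * (f u + g u f)) * Q f"
        by (simp add: algebra_simps)
      also have "\<dots> = (s f + (t f)^2 - 1) * Q f + (\<Sum>u\<in>U. (f u - g u f) * Q2 u f)"
        unfolding Q2_def by (simp add: sum_distrib_left sum_distrib_right mult_ac)
      finally show "((norm2U U f)^2 - 1) * Q f = (s f + (t f)^2 - 1) * Q f + (\<Sum>u\<in>U. (f u - g u f) * Q2 u f)" .
    qed
    have "0 = E (\<lambda>f. ((norm2U U f)^2 - 1) * Q f)" using nrm Q by simp
    also have "\<dots> = E (\<lambda>f. (s f + (t f)^2 - 1) * Q f) + E (\<lambda>f. \<Sum>u\<in>U. (f u - g u f) * Q2 u f)"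
      unfolding id2 by (rule E_add[OF pe fU pfZQ]) (intro polyfun_sum fU pfT2)
    also have "E (\<lambda>f. \<Sum>u\<in>U. (f u - g u f) * Q2 u f) = (\<Sum>u\<in>U. E (\<lambda>f. (f u - g u f) * Q2 u f))"
      by (rule E_sum[OF pe fU fU]) (rule pfT2)
    also have "\<dots> = 0" by (intro sum.neutral ballI hZ pfQ2)
    finally show ?thesis by simp
  qed
  have Z0: "E (\<lambda>f. s f + (t f)^2 - 1) = 0" using EF2[OF pfc[of "l - 2" 1]] by simp
  have Z1: "E (\<lambda>f. (s f + (t f)^2 - 1) * s f) = 0"
    using EF2[OF polyfun_mono[OF pfs]] l8 by simp
  have Z2: "E (\<lambda>f. (s f + (t f)^2 - 1) * (t f)^2) = 0"
    using EF2[OF polyfun_mono[OF pft2]] l8 by simp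
  have l2: "2 \<le> l div 2" using l8 by simp
  define W where "W = (\<lambda>f. \<Sum>u\<in>U. (1/N) * (t f * P f u)^2)"
  have pftP: "polyfun U 2 (\<lambda>f. t f * P f u)" for u by (rule polyfun_mult_le[OF pft pfP fU]) simp
  have EW: "E W \<ge> 0" unfolding W_def
    by (rule E_sos[OF pe fU fU]) (use Npos polyfun_mono[OF pftP l2] in auto)
  have pfW: "polyfun U l W" unfolding W_def
    by (intro polyfun_sum fU polyfun_scale polyfun_pow_le[OF pftP fU]) (use l8 in simp)
  have Wid: "W f = s f * (t f)^2" for f
    unfolding W_def s_def by (simp add: power_mult_distrib sum_distrib_left sum_distrib_right mult_ac)
  define SQ where "SQ = (\<lambda>f. \<Sum>q\<leftarrow>qs. (q f)^2)"
  have qdeg: "\<forall>q\<in>set qs. polyfun U 2 q" by (rule sos_deg_q[OF qs1 qs2])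
  have ESQ: "E SQ \<ge> 0"
  proof -
    have "E SQ = E (\<lambda>x. \<Sum>F\<leftarrow>map (\<lambda>q x. (q x)^2) qs. F x)"
      unfolding SQ_def by (simp add: o_def)
    also have "\<dots> = (\<Sum>F\<leftarrow>map (\<lambda>q x. (q x)^2) qs. E F)"
    proof (rule E_sumlist[OF pe fU])
      fix F assume "F \<in> set (map (\<lambda>q x. (q x)^2) qs)"
      then obtain q where q: "q \<in> set qs" "F = (\<lambda>x. (q x)^2)" by auto
      show "polyfun U l F" unfolding q(2)
        by (rule polyfun_pow_le[OF qdeg[rule_format, OF q(1)] fU]) (use l8 in simp)
    qed
    also have "\<dots> \<ge> 0"
    proof (rule sum_list_nonneg)
      fix y assume "y \<in> set (map E (map (\<lambda>q x. (q x)^2) qs))"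
      then obtain q where q: "q \<in> set qs" "y = E (\<lambda>x. (q x)^2)" by auto
      show "0 \<le> y" unfolding q(2) by (rule E_sq[OF pe fU polyfun_mono[OF qdeg[rule_format, OF q(1)] l2]])
    qed
    finally show ?thesis .
  qed
  have pfSQ: "polyfun U l SQ" unfolding SQ_def using pfL[OF qs2] .
  have hq': "(1/N) * (\<Sum>u\<in>U. (P f u)^4) = c^4 * (s f)^2 - SQ f" for f
  proof -
    have p4: "(z::real)^4 = (z^2)^2" for z by (simp add: power_mult[symmetric])
    have "(norm2U U (P f))^4 = (s f)^2"
      unfolding p4[of "norm2U U (P f)"] using n2gen[of U "P f"] unfolding s_def N_def by simp
    then show ?thesis using hq n4gen[of U "P f"] unfolding P_def SQ_def N_def by simp
  qed
  define e where "e = C / c"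
  have epos: "e > 0" unfolding e_def using Cpos cpos by simp
  define a where "a = (1+e)^3"
  define b where "b = (1 + 1/e)^3"
  define x where "x = (\<lambda>u f. P f u)"
  define y where "y = (\<lambda>u f. f0 u * t f)"
  define k1 where "k1 = (1+e)^2/e"
  define k2 where "k2 = 1/e^2"
  define k3 where "k3 = 2/e"
  define X1 where "X1 = (\<lambda>u f. e * (x u f)^2 - (1/e) * (y u f)^2)"
  define X2 where "X2 = (\<lambda>u f. (e * x u f - y u f)^2)"
  define X3 where "X3 = (\<lambda>u f. (x u f + y u f) * (e * x u f - y u f))"
  define R1 where "R1 = (\<lambda>f. \<Sum>u\<in>U. k1/N * (X1 u f)^2)"
  define R2 where "R2 = (\<lambda>f. \<Sum>u\<in>U. k2/N * (X2 u f)^2)"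
  define R3 where "R3 = (\<lambda>f. \<Sum>u\<in>U. k3/N * (X3 u f)^2)"
  define R where "R = (\<lambda>f. R1 f + R2 f + R3 f)"
  have pfx: "polyfun U 1 (x u)" for u unfolding x_def by (rule pfP)
  have pfy': "polyfun U 1 (y u)" for u unfolding y_def by (rule pfy)
  have pfX1: "polyfun U 2 (X1 u)" for u unfolding X1_def
    by (intro polyfun_diff polyfun_scale polyfun_pow_le[OF pfx fU] polyfun_pow_le[OF pfy' fU]) simp_all
  have pfX2: "polyfun U 2 (X2 u)" for u unfolding X2_def
    by (rule polyfun_pow_le[OF polyfun_diff[OF polyfun_scale[OF pfx] pfy'] fU]) simp
  have pfX3: "polyfun U 2 (X3 u)" for u unfolding X3_def
    by (rule polyfun_mult_le[OF polyfun_add[OF pfx pfy'] polyfun_diff[OF polyfun_scale[OF pfx] pfy'] fU]) simp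
  have pfXX: "polyfun U l (\<lambda>f. \<Sum>u\<in>U. k/N * (X u f)^2)" if "\<And>u. polyfun U 2 (X u)" for X k
    by (intro polyfun_sum fU polyfun_scale polyfun_pow_le[OF that fU]) (use l8 in simp)
  have ES: "E (\<lambda>f. \<Sum>u\<in>U. k/N * (X u f)^2) \<ge> 0" if "\<And>u. polyfun U 2 (X u)" "k \<ge> 0" for X k
    by (rule E_sos[OF pe fU fU]) (use that Npos polyfun_mono[OF that(1) l2] in auto)
  have pfR1: "polyfun U l R1" unfolding R1_def by (rule pfXX[OF pfX1])
  have pfR2: "polyfun U l R2" unfolding R2_def by (rule pfXX[OF pfX2])
  have pfR3: "polyfun U l R3" unfolding R3_def by (rule pfXX[OF pfX3])
  have pfR: "polyfun U l R" unfolding R_def by (intro polyfun_add pfR1 pfR2 pfR3)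
  have ER: "E R \<ge> 0"
  proof -
    have "E R = E (\<lambda>f. R1 f + R2 f) + E R3"
      unfolding R_def by (rule E_add[OF pe fU polyfun_add[OF pfR1 pfR2] pfR3])
    also have "E (\<lambda>f. R1 f + R2 f) = E R1 + E R2" by (rule E_add[OF pe fU pfR1 pfR2])
    finally have e: "E R = E R1 + E R2 + E R3" .
    have "k1 \<ge> 0" "k2 \<ge> 0" "k3 \<ge> 0" unfolding k1_def k2_def k3_def using epos by auto
    then have "E R1 \<ge> 0" "E R2 \<ge> 0" "E R3 \<ge> 0" unfolding R1_def R2_def R3_def
      using ES[OF pfX1] ES[OF pfX2] ES[OF pfX3] by auto
    then show ?thesis unfolding e by simp
  qed
  have Rid: "R f = a * ((1/N) * (\<Sum>u\<in>U. (P f u)^4)) + b * C^4 * (t f)^4 - G4 f" for f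
  proof -
    have pt: "a * (x u f)^4 + b * (y u f)^4 - (g u f)^4 = k1 * (X1 u f)^2 + k2 * (X2 u f)^2 + k3 * (X3 u f)^2" for u
      unfolding a_def b_def k1_def k2_def k3_def X1_def X2_def X3_def g_def x_def y_def
      using sos4[OF epos, of "P f u" "f0 u * t f"] by simp
    have s2: "(\<Sum>u\<in>U. a * (x u f)^4 + b * (y u f)^4 - (g u f)^4) = a * (\<Sum>u\<in>U. (P f u)^4) + b * (t f)^4 * (\<Sum>u\<in>U. (f0 u)^4) - (\<Sum>u\<in>U. (g u f)^4)"
      unfolding x_def y_def by (simp add: sum.distrib sum_subtractf sum_distrib_left power_mult_distrib mult_ac)
    have "R f = (\<Sum>u\<in>U. (1/N) * (k1 * (X1 u f)^2 + k2 * (X2 u f)^2 + k3 * (X3 u f)^2))"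
      unfolding R_def R1_def R2_def R3_def sum.distrib[symmetric]
      by (rule sum.cong[OF refl]) (use Npos in \<open>simp add: field_simps\<close>)
    also have "\<dots> = (1/N) * (\<Sum>u\<in>U. k1 * (X1 u f)^2 + k2 * (X2 u f)^2 + k3 * (X3 u f)^2)"
      by (simp only: sum_distrib_left)
    also have "\<dots> = (1/N) * (\<Sum>u\<in>U. a * (x u f)^4 + b * (y u f)^4 - (g u f)^4)"
      using pt by simp
    also have "\<dots> = (1/N) * (a * (\<Sum>u\<in>U. (P f u)^4) + b * (t f)^4 * (\<Sum>u\<in>U. (f0 u)^4) - (\<Sum>u\<in>U. (g u f)^4))"
      by (simp only: s2)
    also have "\<dots> = a * ((1/N) * (\<Sum>u\<in>U. (P f u)^4)) + b * (t f)^4 * ((1/N) * (\<Sum>u\<in>U. (f0 u)^4)) - G4 f"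
      unfolding G4_def by (simp add: algebra_simps)
    finally have r: "R f = a * ((1/N) * (\<Sum>u\<in>U. (P f u)^4)) + b * (t f)^4 * ((1/N) * (\<Sum>u\<in>U. (f0 u)^4)) - G4 f" .
    show ?thesis using r[unfolded f04] by (simp add: mult_ac)
  qed
  define ac where "ac = a * c^4"
  define bC where "bC = b * C^4"
  define L where "L = [(ac, \<lambda>f. (s f + (t f)^2 - 1) * s f), (-(ac + bC), W), (ac, \<lambda>f. s f + (t f)^2 - 1),
      (bC - ac, \<lambda>f. (t f)^2), (ac, \<lambda>f. 1), (-a, SQ), (bC, \<lambda>f. (s f + (t f)^2 - 1) * (t f)^2), (-1, R)]"
  have G4id: "G4 = (\<lambda>f. \<Sum>(k, F)\<leftarrow>L. k * F f)"
  proof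
    fix f
    have "G4 f = a * ((1/N) * (\<Sum>u\<in>U. (P f u)^4)) + b * C^4 * (t f)^4 - R f" using Rid[of f] by simp
    also have "\<dots> = a * (c^4 * (s f)^2 - SQ f) + b * C^4 * (t f)^4 - R f" using hq' by simp
    finally show "G4 f = (\<Sum>(k, F)\<leftarrow>L. k * F f)"
      unfolding L_def ac_def bC_def by (simp add: Wid algebra_simps power2_eq_square eval_nat_numeral)
  qed
  have pfLs: "polyfun U l F" if "(k, F) \<in> set L" for k F
  proof -
    have "polyfun U l (\<lambda>f. (s f + (t f)^2 - 1) * s f)" by (rule polyfun_mult_le[OF pfZ0 pfs fU]) (use l8 in simp)
    moreover have "polyfun U l (\<lambda>f. s f + (t f)^2 - 1)" by (rule polyfun_mono[OF pfZ0]) (use l8 in simp)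
    moreover have "polyfun U l (\<lambda>f. (t f)^2)" by (rule polyfun_mono[OF pft2]) (use l8 in simp)
    moreover have "polyfun U l (\<lambda>f. (s f + (t f)^2 - 1) * (t f)^2)" by (rule polyfun_mult_le[OF pfZ0 pft2 fU]) (use l8 in simp)
    ultimately show ?thesis using that pfW pfSQ pfR pfc unfolding L_def by auto
  qed
  have "E G4 = (\<Sum>(k, F)\<leftarrow>L. k * E F)" unfolding G4id by (rule E_lincomb[OF pe fU pfLs])
  also have "\<dots> = ac * (1 - E (\<lambda>f. (t f)^2)) + bC * E (\<lambda>f. (t f)^2) - (ac + bC) * E W - a * E SQ - E R"
    unfolding L_def using Z0 Z1 Z2 E_const[OF pe fU, of 1] by (simp add: algebra_simps)
  also have "\<dots> \<le> ac * (1 - E (\<lambda>f. (t f)^2)) + bC * E (\<lambda>f. (t f)^2)"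
  proof -
    have "ac \<ge> 0" "bC \<ge> 0" "a \<ge> 0" unfolding ac_def bC_def a_def b_def using epos by auto
    then have "(ac + bC) * E W \<ge> 0" "a * E SQ \<ge> 0" using EW ESQ by auto
    then show ?thesis using ER by linarith
  qed
  finally have main0: "E G4 \<le> ac * (1 - E (\<lambda>f. (t f)^2)) + bC * E (\<lambda>f. (t f)^2)" .
  have main: "C^4 \<le> ac * (1 - E (\<lambda>f. (t f)^2)) + bC * E (\<lambda>f. (t f)^2)"
    using big EF1 main0 by linarith
  have acv: "ac = (c + C)^3 * c"
  proof -
    have h: "(1 + e) * c = c + C" unfolding e_def using cpos by (simp add: field_simps)
    have "ac = ((1+e)*c)^3 * c" unfolding ac_def a_def power_mult_distrib by (simp add: eval_nat_numeral mult_ac)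
    then show ?thesis using h by simp
  qed
  have bCv: "bC = (c + C)^3 * C"
  proof -
    have h: "(1 + 1/e) * C = c + C" unfolding e_def using cpos Cpos by (simp add: field_simps)
    have "bC = ((1 + 1/e)*C)^3 * C" unfolding bC_def b_def power_mult_distrib by (simp add: eval_nat_numeral mult_ac)
    then show ?thesis using h by simp
  qed
  have "C^4 \<le> (c+C)^3 * (c * (1 - E (\<lambda>f. (t f)^2)) + C * E (\<lambda>f. (t f)^2))"
    using main unfolding acv bCv by (simp add: algebra_simps)
  then have "E (\<lambda>f. (t f)^2) \<ge> 1 - 10 * c / C" by (rule final_num[OF cpos Cc])
  then show ?thesis unfolding t_def .
qed


theorem lemma5p6:
  "\<exists>K::real. K > 0 \<and>
    (\<forall>(U::nat set) (V'::(nat \<Rightarrow> real) set) (c::real) (f0::nat \<Rightarrow> real) (C::real)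
       (l::nat) (E::((nat \<Rightarrow> real) \<Rightarrow> real) \<Rightarrow> real).
      finite U \<longrightarrow>
      V' \<subseteq> RU U \<longrightarrow> subspaceF V' \<longrightarrow>
      c > 0 \<longrightarrow>
      (\<exists>qs::((nat \<Rightarrow> real) \<Rightarrow> real) list.
          (\<forall>q\<in>set qs. \<exists>d. polyfun U d q) \<and>
          polyfun U 4 (\<lambda>f. \<Sum>q\<leftarrow>qs. (q f)^2) \<and>
          (\<forall>f. (norm4U U (projU U V' f))^4
                 = c^4 * (norm2U U (projU U V' f))^4 - (\<Sum>q\<leftarrow>qs. (q f)^2))) \<longrightarrow>
      f0 \<in> RU U \<longrightarrow> (\<forall>v\<in>V'. ipU U f0 v = 0) \<longrightarrow>
      norm2U U f0 = 1 \<longrightarrow> norm4U U f0 = C \<longrightarrow> C > 100 * c \<longrightarrow>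
      l \<ge> 8 \<longrightarrow> pseudoexp U l E \<longrightarrow>
      (\<forall>(a::nat \<Rightarrow> real) Q. (\<forall>v\<in>spanF (insert f0 V'). (\<Sum>u\<in>U. a u * v u) = 0) \<longrightarrow>
           polyfun U (l - 1) Q \<longrightarrow> E (\<lambda>f. (\<Sum>u\<in>U. a u * f u) * Q f) = 0) \<longrightarrow>
      (\<forall>Q. polyfun U (l - 2) Q \<longrightarrow> E (\<lambda>f. ((norm2U U f)^2 - 1) * Q f) = 0) \<longrightarrow>
      E (\<lambda>f. (norm4U U f)^4) \<ge> C^4 \<longrightarrow>
      E (\<lambda>f. (ipU U f f0)^2) \<ge> 1 - K * c / C)"
  apply (rule exI[of _ "10::real"])
  apply (rule conjI, simp)
  apply (intro allI impI)
  apply (erule exE)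
  apply (elim conjE)
  apply (rule main_bound; assumption)
  done

end
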